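(* Let $k\ge2$. For every nonzero $\xi\in\mathbb{R}^4$ the sequence $0\leftarrow\mathbb{C}^{k+1}\xleftarrow{D_0^{(k)}(\xi)^t}\mathbb{C}^{2k}\xleftarrow{D_1^{(k)}(\xi)^t}\mathbb{C}^{k-1}\leftarrow0$ is exact.
   Context: Put $a=\frac1i(\xi_0-i\xi_1)$, $\bar a'=\frac1i(\xi_0+i\xi_1)$, $b=\frac1i(\xi_2-i\xi_3)$, $\bar b'=\frac1i(\xi_2+i\xi_3)$. $D_0^{(k)}(\xi)$ is the $(2k)\times(k+1)$ matrix whose rows $2j$, $2j+1$ ($j=0,\dots,k-1$, rows/columns indexed from $0$) are: row $2j$ has entry $-\bar b'$ in column $j$ and $-\bar a'$ in column $j+1$; row $2j+1$ has entry $a$ in column $j$ and $-b$ in column $j+1$; all other entries $0$. $D_1^{(k)}(\xi)$ is the $(k-1)\times(2k)$ matrix whose row $j$ ($j=0,\dots,k-2$) has entries $-a,-\bar b',b,-\bar a'$ in columns $2j,2j+1,2j+2,2j+3$ and zeros elsewhere. (These are the symbols of the $k$-Cauchy–Fueter operators, obtained by replacing $\partial_{x_l}$ by $\frac1i\xi_l$.) $t$ denotes transpose; exactness means $D_0^{(k)}(\xi)^t$ is surjective, $D_1^{(k)}(\xi)^t$ injective, and $\operatorname{Im}D_1^{(k)}(\xi)^t=\ker D_0^{(k)}(\xi)^t$. *)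

theory Defs
  imports Complex_Main "Jordan_Normal_Form.Matrix"
begin

definition sym_a :: "real vec \<Rightarrow> complex" where
  "sym_a xi = (1 / \<i>) * (complex_of_real (xi $ 0) - \<i> * complex_of_real (xi $ 1))"
definition sym_a' :: "real vec \<Rightarrow> complex" where
  "sym_a' xi = (1 / \<i>) * (complex_of_real (xi $ 0) + \<i> * complex_of_real (xi $ 1))"
definition sym_b :: "real vec \<Rightarrow> complex" where
  "sym_b xi = (1 / \<i>) * (complex_of_real (xi $ 2) - \<i> * complex_of_real (xi $ 3))"
definition sym_b' :: "real vec \<Rightarrow> complex" where
  "sym_b' xi = (1 / \<i>) * (complex_of_real (xi $ 2) + \<i> * complex_of_real (xi $ 3))"

definition D0 :: "nat \<Rightarrow> real vec \<Rightarrow> complex mat" where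
  "D0 k xi = mat (2 * k) (k + 1) (\<lambda>(r, c).
     let j = r div 2 in
     if even r then
       (if c = j then - sym_b' xi else if c = j + 1 then - sym_a' xi else 0)
     else
       (if c = j then sym_a xi else if c = j + 1 then - sym_b xi else 0))"

definition D1 :: "nat \<Rightarrow> real vec \<Rightarrow> complex mat" where
  "D1 k xi = mat (k - 1) (2 * k) (\<lambda>(j, c).
     if c = 2 * j then - sym_a xi
     else if c = 2 * j + 1 then - sym_b' xi
     else if c = 2 * j + 2 then sym_b xi
     else if c = 2 * j + 3 then - sym_a' xi
     else 0)"

end

theory Submission imports Defs begin

lemma sum_pairs: "(\<Sum>r\<in>{0..<2*(k::nat)}. f r) = (\<Sum>j\<in>{0..<k}. f (2*j) + f (2*j+1))"
  by (induction k) (auto simp: numeral_2_eq_2 add.assoc)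


lemma D0_entry: "r < 2*k \<Longrightarrow> c < k+1 \<Longrightarrow> D0 k xi $$ (r,c) =
   (if c = r div 2 then (if even r then - sym_b' xi else sym_a xi) else 0) +
   (if c = r div 2 + 1 then (if even r then - sym_a' xi else - sym_b xi) else 0)"
  by (auto simp: D0_def Let_def)

lemma D1_entry: "j < k - 1 \<Longrightarrow> r < 2*k \<Longrightarrow> D1 k xi $$ (j,r) =
   (if j = r div 2 then (if even r then - sym_a xi else - sym_b' xi) else 0) +
   (if j + 1 = r div 2 then (if even r then sym_b xi else - sym_a' xi) else 0)"
  by (auto simp: D1_def elim!: evenE oddE)

lemma D0t: assumes "x \<in> carrier_vec (2*k)" "c < k+1"
  shows "(transpose_mat (D0 k xi) *\<^sub>v x) $ c =
     (if c < k then - sym_b' xi * x$(2*c) + sym_a xi * x$(2*c+1) else 0) +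
     (if 0 < c then - sym_a' xi * x$(2*c-2) - sym_b xi * x$(2*c-1) else 0)" (is "_ = ?r")
proof -
  have "(transpose_mat (D0 k xi) *\<^sub>v x) $ c = (\<Sum>r\<in>{0..<2*k}. D0 k xi $$ (r,c) * x$r)"
    using assms by (simp add: D0_def scalar_prod_def)
  also have "\<dots> = (\<Sum>j\<in>{0..<k}. D0 k xi $$ (2*j,c) * x$(2*j) + D0 k xi $$ (2*j+1,c) * x$(2*j+1))"
    by (rule sum_pairs)
  also have "\<dots> = (\<Sum>j\<in>{0..<k}. (if c = j then - sym_b' xi * x$(2*c) + sym_a xi * x$(2*c+1) else 0)
       + (if j = c - 1 \<and> 0 < c then - sym_a' xi * x$(2*c-2) - sym_b xi * x$(2*c-1) else 0))"
    apply (rule sum.cong[OF refl])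
    using assms(2) apply (auto simp: D0_entry algebra_simps)
    done
  also have "\<dots> = ?r"
    apply (simp add: sum.distrib)
    using assms(2) by auto
  finally show ?thesis .
qed

lemma D1t: assumes "z \<in> carrier_vec (k-1)" "r < 2*k"
  shows "(transpose_mat (D1 k xi) *\<^sub>v z) $ r =
     (if r div 2 < k - 1 then (if even r then - sym_a xi else - sym_b' xi) * z$(r div 2) else 0) +
     (if 0 < r div 2 then (if even r then sym_b xi else - sym_a' xi) * z$(r div 2 - 1) else 0)" (is "_ = ?r")
proof -
  have "(transpose_mat (D1 k xi) *\<^sub>v z) $ r = (\<Sum>j\<in>{0..<k-1}. D1 k xi $$ (j,r) * z$j)"
    using assms by (simp add: D1_def scalar_prod_def)
  also have "\<dots> = (\<Sum>j\<in>{0..<k-1}. (if j = r div 2 then (if even r then - sym_a xi else - sym_b' xi) * z$(r div 2) else 0) +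
     (if j = r div 2 - 1 \<and> 0 < r div 2 then (if even r then sym_b xi else - sym_a' xi) * z$(r div 2 - 1) else 0))"
    apply (rule sum.cong[OF refl])
    using assms(2) apply (auto simp: D1_entry algebra_simps)
    done
  also have "\<dots> = ?r"
    apply (simp add: sum.distrib)
    using assms(2) by auto
  finally show ?thesis .
qed
lemma N_nz:
  assumes "xi \<in> carrier_vec 4" "xi \<noteq> 0\<^sub>v 4"
  shows "sym_a xi * sym_a' xi + sym_b xi * sym_b' xi \<noteq> 0"
proof
  assume h: "sym_a xi * sym_a' xi + sym_b xi * sym_b' xi = 0"
  have "sym_a xi * sym_a' xi + sym_b xi * sym_b' xi
      = - complex_of_real ((xi$0)^2 + (xi$1)^2 + (xi$2)^2 + (xi$3)^2)"
    by (simp add: sym_a_def sym_a'_def sym_b_def sym_b'_def field_simps power2_eq_square)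
  with h have "(xi$0)^2 + (xi$1)^2 + (xi$2)^2 + (xi$3)^2 = 0"
    by (metis add.inverse_neutral neg_equal_iff_equal of_real_eq_0_iff)
  hence "(xi$0)^2 = 0 \<and> (xi$1)^2 = 0 \<and> (xi$2)^2 = 0 \<and> (xi$3)^2 = 0"
    using zero_le_power2[of "xi$0"] zero_le_power2[of "xi$1"] zero_le_power2[of "xi$2"]
      zero_le_power2[of "xi$3"] by linarith
  hence z: "xi$0 = 0" "xi$1 = 0" "xi$2 = 0" "xi$3 = 0" by auto
  have "xi = 0\<^sub>v 4"
  proof (rule eq_vecI)
    fix i assume "i < dim_vec (0\<^sub>v 4 :: real vec)"
    hence "i = 0 \<or> i = 1 \<or> i = 2 \<or> i = 3" by auto
    thus "xi $ i = 0\<^sub>v 4 $ i" using z \<open>i < _\<close> by auto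
  qed (use assms in auto)
  with assms show False by simp
qed

theorem lemma4p1:
  fixes k :: nat and xi :: "real vec"
  assumes "k \<ge> 2"
    and "xi \<in> carrier_vec 4" and "xi \<noteq> 0\<^sub>v 4"
  shows "(\<forall>y \<in> carrier_vec (k + 1). \<exists>x \<in> carrier_vec (2 * k).
            transpose_mat (D0 k xi) *\<^sub>v x = y)
       \<and> (\<forall>z \<in> carrier_vec (k - 1).
            transpose_mat (D1 k xi) *\<^sub>v z = 0\<^sub>v (2 * k) \<longrightarrow> z = 0\<^sub>v (k - 1))
       \<and> {transpose_mat (D1 k xi) *\<^sub>v z | z. z \<in> carrier_vec (k - 1)}
         = {x \<in> carrier_vec (2 * k). transpose_mat (D0 k xi) *\<^sub>v x = 0\<^sub>v (k + 1)}"
proof -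
  define a where "a = sym_a xi"
  define a' where "a' = sym_a' xi"
  define b where "b = sym_b xi"
  define b' where "b' = sym_b' xi"
  define N where "N = - (a * a' + b * b')"
  have N: "N \<noteq> 0" unfolding N_def neg_equal_0_iff_equal a_def a'_def b_def b'_def by (rule N_nz[OF assms(2,3)])
  have P1: "\<exists>x \<in> carrier_vec (2 * k). transpose_mat (D0 k xi) *\<^sub>v x = y"
    if y: "y \<in> carrier_vec (k + 1)" for y
  proof -
    define U where "U j = y$j * b / N + (if j = k - 1 then y$k * a / N else 0)" for j
    define V where "V j = - y$j * a' / N + (if j = k - 1 then y$k * b' / N else 0)" for j
    define x where "x = vec (2*k) (\<lambda>r. if even r then U (r div 2) else V (r div 2))"
    have xc: "x \<in> carrier_vec (2*k)" by (simp add: x_def)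
    have "transpose_mat (D0 k xi) *\<^sub>v x = y"
    proof (rule eq_vecI)
      fix c assume "c < dim_vec y"
      hence c: "c < k + 1" using y by simp
      have x1: "x $ (2*j) = U j" "x $ (2*j+1) = V j" if "j < k" for j
        using that by (auto simp: x_def)
      have x2: "x $ (2*c-2) = U (c-1)" "x $ (2*c-1) = V (c-1)" if c0: "0 < c" and ck: "c \<le> k"
      proof -
        obtain m where m: "c = Suc m" using c0 by (cases c) auto
        have "2*c-2 = 2*m" "2*c-1 = 2*m+1" using m by auto
        thus "x $ (2*c-2) = U (c-1)" "x $ (2*c-1) = V (c-1)" using x1[of m] m ck by auto
      qed
      have x3: "x $ Suc (2*j) = V j" if "j < k" for j using x1(2)[OF that] by simp
      have x4: "x $ (2*c - Suc 0) = V (c-1)" if "0 < c" "c \<le> k" using x2(2)[OF that] by simp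
      have L: "(transpose_mat (D0 k xi) *\<^sub>v x) $ c =
         (if c < k then - b' * U c + a * V c else 0) + (if 0 < c then - a' * U (c-1) - b * V (c-1) else 0)"
        unfolding D0t[OF xc c] a_def[symmetric] a'_def[symmetric] b_def[symmetric] b'_def[symmetric]
        using c x1[of c] x2 by (simp add: x1 x2 x3 x4 x1[of 0, simplified] x3[of 0, simplified])
      have NN: "a * a' + b * b' \<noteq> 0" using N unfolding N_def by (metis neg_equal_0_iff_equal)
      show "(transpose_mat (D0 k xi) *\<^sub>v x) $ c = y $ c"
        unfolding L using c N \<open>k \<ge> 2\<close>
        apply (cases "c = 0"; cases "c = k"; cases "c = k - 1")
        apply (auto simp: U_def V_def field_simps)
        apply (auto simp: N_def algebra_simps)
        done
    qed (use y in \<open>auto simp: D0_def\<close>)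
    with xc show ?thesis by blast
  qed
  have NN: "a * a' + b * b' \<noteq> 0" using N unfolding N_def by (metis neg_equal_0_iff_equal)
  have W0: "(transpose_mat (D1 k xi) *\<^sub>v z) $ (2*m) =
      - a * (if m < k - 1 then z$m else 0) + b * (if 0 < m then z$(m-1) else 0)"
    if "z \<in> carrier_vec (k-1)" "m < k" for z m
    using D1t[OF that(1), of "2*m" xi] that(2)
    by (simp add: a_def a'_def b_def b'_def)
  have W1: "(transpose_mat (D1 k xi) *\<^sub>v z) $ (2*m+1) =
      - b' * (if m < k - 1 then z$m else 0) - a' * (if 0 < m then z$(m-1) else 0)"
    if "z \<in> carrier_vec (k-1)" "m < k" for z m
    using D1t[OF that(1), of "2*m+1" xi] that(2)
    by (simp add: a_def a'_def b_def b'_def)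
  have T0: "(transpose_mat (D0 k xi) *\<^sub>v x) $ 0 = - b' * x$0 + a * x$1"
    if "x \<in> carrier_vec (2*k)" for x
    using D0t[OF that, of 0 xi] \<open>k \<ge> 2\<close> by (simp add: a_def a'_def b_def b'_def)
  have TS: "(transpose_mat (D0 k xi) *\<^sub>v x) $ Suc m =
     (if Suc m < k then - b' * x$(2*Suc m) + a * x$(2*Suc m+1) else 0)
     + (- a' * x$(2*m) - b * x$(2*m+1))"
    if "x \<in> carrier_vec (2*k)" "Suc m < k + 1" for x m
  proof -
    have e: "2 * Suc m - 2 = 2*m" "2 * Suc m - 1 = 2*m+1" by auto
    show ?thesis using D0t[OF that(1) that(2), of xi] unfolding e
      by (simp add: a_def a'_def b_def b'_def)
  qed
  have P2: "z = 0\<^sub>v (k - 1)"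
    if z: "z \<in> carrier_vec (k - 1)" and h: "transpose_mat (D1 k xi) *\<^sub>v z = 0\<^sub>v (2 * k)" for z
  proof (rule eq_vecI)
    fix j assume "j < dim_vec (0\<^sub>v (k - 1) :: complex vec)"
    hence j: "j < k - 1" by simp
    have "(transpose_mat (D1 k xi) *\<^sub>v z) $ (2*j) = 0" "(transpose_mat (D1 k xi) *\<^sub>v z) $ (2*j+1) = 0"
      using h j by auto
    hence "- a * z$j + b * (if 0 < j then z$(j-1) else 0) = 0"
          "- b' * z$j - a' * (if 0 < j then z$(j-1) else 0) = 0"
      using W0[OF z, of j] W1[OF z, of j] j by auto
    moreover have "(a * a' + b * b') * z$j = - a' * (- a * z$j + b * (if 0 < j then z$(j-1) else 0))
        - b * (- b' * z$j - a' * (if 0 < j then z$(j-1) else 0))"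
      by (simp add: algebra_simps)
    ultimately have "(a * a' + b * b') * z$j = 0" by simp
    with NN show "z $ j = 0\<^sub>v (k - 1) $ j" using j by simp
  qed (use z in auto)
  have P3: "transpose_mat (D0 k xi) *\<^sub>v (transpose_mat (D1 k xi) *\<^sub>v z) = 0\<^sub>v (k + 1)"
    if z: "z \<in> carrier_vec (k - 1)" for z
  proof (rule eq_vecI)
    have wc: "transpose_mat (D1 k xi) *\<^sub>v z \<in> carrier_vec (2*k)"
      unfolding carrier_vec_def by (simp add: D1_def)
    fix c assume "c < dim_vec (0\<^sub>v (k + 1) :: complex vec)"
    hence c: "c < k + 1" by simp
    show "(transpose_mat (D0 k xi) *\<^sub>v (transpose_mat (D1 k xi) *\<^sub>v z)) $ c = 0\<^sub>v (k + 1) $ c"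
    proof (cases c)
      case 0
      then show ?thesis using T0[OF wc] W0[OF z, of 0] W1[OF z, of 0] \<open>k \<ge> 2\<close>
        by (simp add: algebra_simps)
    next
      case (Suc m)
      have mk: "m < k" using c Suc by simp
      show ?thesis
      proof (cases "Suc m < k")
        case True
        hence mk1: "m < k - 1" by simp
        have e: "(transpose_mat (D0 k xi) *\<^sub>v (transpose_mat (D1 k xi) *\<^sub>v z)) $ c =
          (- b' * (- a * (if Suc m < k - 1 then z$(Suc m) else 0) + b * z$m)
           + a * (- b' * (if Suc m < k - 1 then z$(Suc m) else 0) - a' * z$m))
          + (- a' * (- a * z$m + b * (if 0 < m then z$(m-1) else 0))
             - b * (- b' * z$m - a' * (if 0 < m then z$(m-1) else 0)))"
          using TS[OF wc, of m] Suc c True mk1 W0[OF z mk] W1[OF z mk]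
            W0[OF z, of "Suc m"] W1[OF z, of "Suc m"] by simp
        have id: "(- b' * (- a * t1 + b * zm) + a * (- b' * t1 - a' * zm))
          + (- a' * (- a * zm + b * t0) - b * (- b' * zm - a' * t0)) = 0" for t0 t1 zm :: complex
          by (simp add: algebra_simps)
        show ?thesis unfolding e id using c by simp
      next
        case False
        hence mk1: "\<not> m < k - 1" using c Suc by simp
        have e: "(transpose_mat (D0 k xi) *\<^sub>v (transpose_mat (D1 k xi) *\<^sub>v z)) $ c =
          (- a' * (- a * 0 + b * (if 0 < m then z$(m-1) else 0))
             - b * (- b' * 0 - a' * (if 0 < m then z$(m-1) else 0)))"
          using TS[OF wc, of m] Suc c False mk1 W0[OF z mk] W1[OF z mk] by simp
        have id: "(- a' * (- a * 0 + b * t0) - b * (- b' * 0 - a' * t0)) = 0" for t0 :: complex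
          by (simp add: algebra_simps)
        show ?thesis unfolding e id using c by simp
      qed
    qed
  qed (simp add: D0_def)
  have P4: "\<exists>z \<in> carrier_vec (k - 1). transpose_mat (D1 k xi) *\<^sub>v z = x"
    if x: "x \<in> carrier_vec (2*k)" and h: "transpose_mat (D0 k xi) *\<^sub>v x = 0\<^sub>v (k + 1)" for x
  proof -
    define z where "z = vec (k-1) (\<lambda>j. (a' * x$(2*j) + b * x$(2*j+1)) / N)"
    have zc: "z \<in> carrier_vec (k-1)" by (simp add: z_def)
    have "(transpose_mat (D0 k xi) *\<^sub>v x) $ 0 = 0" using h by simp
    hence K0: "- b' * x$0 + a * x$1 = 0" using T0[OF x] by simp
    have KS: "(if Suc m < k then - b' * x$(2*Suc m) + a * x$(2*Suc m+1) else 0)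
     + (- a' * x$(2*m) - b * x$(2*m+1)) = 0" if "m < k" for m
    proof -
      have "(transpose_mat (D0 k xi) *\<^sub>v x) $ Suc m = 0" using h that by simp
      thus ?thesis using TS[OF x, of m] that by simp
    qed
    have A: "(if m < k - 1 then z$m else 0) = (a' * x$(2*m) + b * x$(2*m+1)) / N" if m: "m < k" for m
    proof (cases "m < k - 1")
      case True thus ?thesis by (simp add: z_def)
    next
      case False
      hence "Suc m = k" using m by auto
      with KS[OF m] have "- a' * x$(2*m) - b * x$(2*m+1) = 0" by simp
      moreover have "a' * x$(2*m) + b * x$(2*m+1) = - (- a' * x$(2*m) - b * x$(2*m+1))"
        by (simp add: algebra_simps)
      ultimately have "a' * x$(2*m) + b * x$(2*m+1) = 0" by simp
      thus ?thesis using False by simp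
    qed
    have B: "(if 0 < m then z$(m-1) else 0) = (- b' * x$(2*m) + a * x$(2*m+1)) / N" if m: "m < k" for m
    proof (cases m)
      case 0 thus ?thesis using K0 by simp
    next
      case (Suc n)
      have "n < k" "n < k - 1" using m Suc by auto
      have k1: "(- b' * x$(2*Suc n) + a * x$(2*Suc n+1)) + (- a' * x$(2*n) - b * x$(2*n+1)) = 0"
        using KS[OF \<open>n < k\<close>] Suc m by simp
      have "- b' * x$(2*Suc n) + a * x$(2*Suc n+1) = - (- a' * x$(2*n) - b * x$(2*n+1))"
        using k1 by (subst eq_neg_iff_add_eq_0)
      also have "\<dots> = a' * x$(2*n) + b * x$(2*n+1)" by (simp add: algebra_simps)
      finally have "- b' * x$(2*m) + a * x$(2*m+1) = a' * x$(2*n) + b * x$(2*n+1)" using Suc by simp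
      thus ?thesis using Suc \<open>n < k - 1\<close> by (simp add: z_def)
    qed
    have "transpose_mat (D1 k xi) *\<^sub>v z = x"
    proof (rule eq_vecI)
      fix r assume "r < dim_vec x"
      hence r: "r < 2*k" using x by simp
      obtain m where m: "r = 2*m \<or> r = 2*m+1" by (metis dvd_mult_div_cancel odd_two_times_div_two_succ)
      hence mk: "m < k" using r by auto
      show "(transpose_mat (D1 k xi) *\<^sub>v z) $ r = x $ r"
        using m
      proof
        assume rm: "r = 2*m"
        show ?thesis unfolding rm W0[OF zc mk] A[OF mk] B[OF mk] using N
          by (simp add: field_simps) (simp add: N_def algebra_simps)
      next
        assume rm: "r = 2*m+1"
        show ?thesis unfolding rm W1[OF zc mk] A[OF mk] B[OF mk] using N
          by (simp add: field_simps) (simp add: N_def algebra_simps)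
      qed
    qed (use x in \<open>simp add: D1_def\<close>)
    with zc show ?thesis by blast
  qed
  have P5: "{transpose_mat (D1 k xi) *\<^sub>v z | z. z \<in> carrier_vec (k - 1)}
         = {x \<in> carrier_vec (2 * k). transpose_mat (D0 k xi) *\<^sub>v x = 0\<^sub>v (k + 1)}"
  proof (intro equalityI subsetI)
    fix x assume "x \<in> {transpose_mat (D1 k xi) *\<^sub>v z | z. z \<in> carrier_vec (k - 1)}"
    then obtain z where "z \<in> carrier_vec (k-1)" "x = transpose_mat (D1 k xi) *\<^sub>v z" by blast
    thus "x \<in> {x \<in> carrier_vec (2 * k). transpose_mat (D0 k xi) *\<^sub>v x = 0\<^sub>v (k + 1)}"
      using P3 unfolding carrier_vec_def by (auto simp: D1_def)
  next
    fix x assume "x \<in> {x \<in> carrier_vec (2 * k). transpose_mat (D0 k xi) *\<^sub>v x = 0\<^sub>v (k + 1)}"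
    thus "x \<in> {transpose_mat (D1 k xi) *\<^sub>v z | z. z \<in> carrier_vec (k - 1)}"
      using P4 by blast
  qed
  show ?thesis using P1 P2 P5 by blast
qed

end
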